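(* Let $\hat q$ be an $n\times n$ and $\hat p$ an $m\times m$ parametric matrix, let $M$ be an $n\times m$ $(\hat q,\hat p)$-Manin matrix over $\mathfrak R$ and $N$ an $m\times n$ $(\hat p,\hat q)$-Manin matrix over $\mathfrak R$ such that every $N_{ij}$ commutes with every $M_{kl}$. Then $$\mathrm{char}_{\hat q}(MN,t)=t^{n-m}\,\mathrm{char}_{\hat p}(NM,t).$$
   Context: $\mathfrak R$ is an associative unital algebra over $\mathbb C$; $t$ is a central indeterminate. A parametric $n\times n$ matrix is $\hat q=(q_{ij})$ with nonzero complex entries, $q_{ij}q_{ji}=1$, $q_{ii}=1$. For parametric $\hat q$ ($n\times n$) and $\hat p$ ($m\times m$), an $n\times m$ matrix $M$ over $\mathfrak R$ is a $(\hat q,\hat p)$-Manin matrix if $M_{ik}M_{jk}=q_{ji}M_{jk}M_{ik}$ for $i<j$ and all $k$, and $M_{ik}M_{jl}-q_{ji}p_{kl}M_{jl}M_{ik}+p_{kl}M_{il}M_{jk}-q_{ji}M_{jk}M_{il}=0$ for $i<j$, $k<l$. Let $P_{\hat q}=\sum_{i,j}q_{ji}E_{ij}\otimes E_{ji}$; $s_i\mapsto P_{\hat q}^{(i,i+1)}$ defines an action $\sigma\mapsto P_{\hat q}^{\sigma}$ of $S_k$ on $(\mathbb C^n)^{\otimes k}$, and $A_{\hat q}^{(k)}=\frac1{k!}\sum_{\sigma\in S_k}\mathrm{sgn}(\sigma)P_{\hat q}^{\sigma}$. For an $n\times n$ matrix $X$ over $\mathfrak R$, $e_0(X)=1$, $e_k(X)=\mathrm{tr}_{1,\dots,k}A_{\hat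 q}^{(k)}X_1\cdots X_k$ ($X_a$ = $X$ acting on the $a$-th tensor factor, full trace), and $\mathrm{char}_{\hat q}(X,t)=\sum_{k=0}^n(-1)^ke_k(X)t^{n-k}$; $\mathrm{char}_{\hat p}$ of an $m\times m$ matrix is defined likewise with $\hat p$ and $m$. *)

theory Defs
  imports Complex_Main "HOL-Combinatorics.Permutations"
begin

class cplx_algebra_1 = ring_1 +
  fixes scaleC :: "complex \<Rightarrow> 'a \<Rightarrow> 'a"
  assumes scaleC_add_right: "scaleC c (x + y) = scaleC c x + scaleC c y"
    and scaleC_add_left: "scaleC (c + d) x = scaleC c x + scaleC d x"
    and scaleC_scaleC: "scaleC c (scaleC d x) = scaleC (c * d) x"
    and scaleC_one: "scaleC 1 x = x"
    and mult_scaleC_left: "scaleC c x * y = scaleC c (x * y)"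
    and mult_scaleC_right: "x * scaleC c y = scaleC c (x * y)"

text \<open>Matrices are functions on 0-based indices; only indices below the size matter.\<close>

definition is_parametric :: "nat \<Rightarrow> (nat \<Rightarrow> nat \<Rightarrow> complex) \<Rightarrow> bool" where
  "is_parametric n q \<longleftrightarrow> (\<forall>i<n. \<forall>j<n. q i j \<noteq> 0 \<and> q i j * q j i = 1) \<and> (\<forall>i<n. q i i = 1)"

definition manin :: "(nat \<Rightarrow> nat \<Rightarrow> complex) \<Rightarrow> (nat \<Rightarrow> nat \<Rightarrow> complex) \<Rightarrow> nat \<Rightarrow> nat
    \<Rightarrow> (nat \<Rightarrow> nat \<Rightarrow> 'a::cplx_algebra_1) \<Rightarrow> bool" where
  "manin q p n m M \<longleftrightarrow>
     (\<forall>i j k. i < j \<and> j < n \<and> k < m \<longrightarrow> M i k * M j k = scaleC (q j i) (M j k * M i k)) \<and>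
     (\<forall>i j k l. i < j \<and> j < n \<and> k < l \<and> l < m \<longrightarrow>
        M i k * M j l - scaleC (q j i * p k l) (M j l * M i k)
        + scaleC (p k l) (M i l * M j k) - scaleC (q j i) (M j k * M i l) = 0)"

definition matmul :: "nat \<Rightarrow> (nat \<Rightarrow> nat \<Rightarrow> 'a::cplx_algebra_1) \<Rightarrow> (nat \<Rightarrow> nat \<Rightarrow> 'a) \<Rightarrow> nat \<Rightarrow> nat \<Rightarrow> 'a" where
  "matmul m M N i k = (\<Sum>l<m. M i l * N l k)"

text \<open>Basis of \<open>(\<complex>^n)^{\<otimes>k}\<close>: multi-indices of length k with entries below n.\<close>
definition tidx :: "nat \<Rightarrow> nat \<Rightarrow> nat list set" where
  "tidx n k = {I. length I = k \<and> set I \<subseteq> {..<n}}"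

definition swap_idx :: "nat \<Rightarrow> nat list \<Rightarrow> nat list" where
  "swap_idx a I = I[a := I ! Suc a, Suc a := I ! a]"

text \<open>Matrix entries of \<open>P_q^{(a+1,a+2)}\<close> (0-based position a) on the tensor power:
  \<open>P_q = \<Sum> q_ji E_ij \<otimes> E_ji\<close> maps \<open>e_j \<otimes> e_i\<close> to \<open>q_ji e_i \<otimes> e_j\<close>.\<close>
definition Pswap :: "(nat \<Rightarrow> nat \<Rightarrow> complex) \<Rightarrow> nat \<Rightarrow> nat list \<Rightarrow> nat list \<Rightarrow> complex" where
  "Pswap q a I J = (if J = swap_idx a I then q (I ! Suc a) (I ! a) else 0)"

definition tmul :: "nat \<Rightarrow> nat \<Rightarrow> (nat list \<Rightarrow> nat list \<Rightarrow> complex) \<Rightarrow> (nat list \<Rightarrow> nat list \<Rightarrow> complex)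
    \<Rightarrow> nat list \<Rightarrow> nat list \<Rightarrow> complex" where
  "tmul n k A B I J = (\<Sum>L\<in>tidx n k. A I L * B L J)"

definition tid :: "nat list \<Rightarrow> nat list \<Rightarrow> complex" where
  "tid I J = (if I = J then 1 else 0)"

definition perm_of_word :: "nat list \<Rightarrow> nat \<Rightarrow> nat" where
  "perm_of_word w = foldr (\<lambda>a \<sigma>. transpose a (Suc a) \<circ> \<sigma>) w id"

definition Pword :: "(nat \<Rightarrow> nat \<Rightarrow> complex) \<Rightarrow> nat \<Rightarrow> nat \<Rightarrow> nat list \<Rightarrow> nat list \<Rightarrow> nat list \<Rightarrow> complex" where
  "Pword q n k w = foldr (\<lambda>a B. tmul n k (Pswap q a) B) w tid"

text \<open>\<open>P_q^\<sigma>\<close>, computed along any word in the generators \<open>s_a\<close> (a+1<k) representing \<sigma>.\<close>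
definition Pperm :: "(nat \<Rightarrow> nat \<Rightarrow> complex) \<Rightarrow> nat \<Rightarrow> nat \<Rightarrow> (nat \<Rightarrow> nat) \<Rightarrow> nat list \<Rightarrow> nat list \<Rightarrow> complex" where
  "Pperm q n k \<sigma> = Pword q n k (SOME w. (\<forall>a\<in>set w. Suc a < k) \<and> perm_of_word w = \<sigma>)"

definition Aq :: "(nat \<Rightarrow> nat \<Rightarrow> complex) \<Rightarrow> nat \<Rightarrow> nat \<Rightarrow> nat list \<Rightarrow> nat list \<Rightarrow> complex" where
  "Aq q n k I J = (1 / fact k) * (\<Sum>\<sigma>\<in>{\<sigma>. \<sigma> permutes {..<k}}. of_int (sign \<sigma>) * Pperm q n k \<sigma> I J)"

text \<open>\<open>e_k(X) = tr_{1..k} A^{(k)} X_1 \<cdots> X_k\<close>; the entry \<open>(J,I)\<close> of \<open>X_1\<cdots>X_k\<close> is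
  \<open>X_{j_1 i_1} \<cdots> X_{j_k i_k}\<close> (in this order).\<close>
definition ek :: "(nat \<Rightarrow> nat \<Rightarrow> complex) \<Rightarrow> nat \<Rightarrow> nat \<Rightarrow> (nat \<Rightarrow> nat \<Rightarrow> 'a::cplx_algebra_1) \<Rightarrow> 'a" where
  "ek q n k X = (if k = 0 then 1 else
     (\<Sum>I\<in>tidx n k. \<Sum>J\<in>tidx n k. scaleC (Aq q n k I J) (prod_list (map (\<lambda>a. X (J ! a) (I ! a)) [0..<k]))))"

text \<open>Coefficient of \<open>t^j\<close> (j an integer, allowing Laurent shifts) in
  \<open>char_q(X,t) = \<Sum>_{k=0}^n (-1)^k e_k(X) t^{n-k}\<close>.\<close>
definition char_coeff :: "(nat \<Rightarrow> nat \<Rightarrow> complex) \<Rightarrow> nat \<Rightarrow> (nat \<Rightarrow> nat \<Rightarrow> 'a::cplx_algebra_1) \<Rightarrow> int \<Rightarrow> 'a" where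
  "char_coeff q n X j = (if 0 \<le> j \<and> j \<le> int n then (-1) ^ (n - nat j) * ek q n (n - nat j) X else 0)"

end

theory Submission
  imports Defs
begin


lemma scaleC_zero_right[simp]: "scaleC c (0::'a::cplx_algebra_1) = 0"
proof -
  have "scaleC c (0::'a) + scaleC c 0 = scaleC c 0 + 0" by (simp flip: scaleC_add_right)
  thus ?thesis by simp
qed

lemma scaleC_zero_left[simp]: "scaleC 0 (x::'a::cplx_algebra_1) = 0"
proof -
  have "scaleC 0 x + scaleC 0 x = scaleC 0 x + 0" by (simp flip: scaleC_add_left)
  thus ?thesis by simp
qed

lemma scaleC_minus_right: "scaleC c (- x) = - scaleC c (x::'a::cplx_algebra_1)"
proof -
  have "scaleC c x + scaleC c (- x) = 0" by (simp flip: scaleC_add_right)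
  thus ?thesis by (simp add: add_eq_0_iff)
qed

lemma scaleC_minus_left: "scaleC (- c) x = - scaleC c (x::'a::cplx_algebra_1)"
proof -
  have "scaleC c x + scaleC (-c) x = 0" by (simp flip: scaleC_add_left)
  thus ?thesis by (simp add: add_eq_0_iff)
qed

lemma scaleC_diff_right: "scaleC c (x - y) = scaleC c x - scaleC c (y::'a::cplx_algebra_1)"
  by (simp only: diff_conv_add_uminus scaleC_add_right scaleC_minus_right)

lemma scaleC_sum_right: "scaleC c (sum f A) = (\<Sum>i\<in>A. scaleC c (f i::'a::cplx_algebra_1))"
  by (induction A rule: infinite_finite_induct) (auto simp: scaleC_add_right)

lemma scaleC_sum_left: "scaleC (sum f A) x = (\<Sum>i\<in>A. scaleC (f i) (x::'a::cplx_algebra_1))"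
  by (induction A rule: infinite_finite_induct) (auto simp: scaleC_add_left)

lemma scaleC_minus_one: "scaleC (-1) x = - (x::'a::cplx_algebra_1)"
  by (simp add: scaleC_minus_left scaleC_one)

lemma finite_tidx[simp]: "finite (tidx n k)"
proof -
  have "tidx n k = {xs. set xs \<subseteq> {..<n} \<and> length xs = k}" by (auto simp: tidx_def)
  thus ?thesis using finite_lists_length_eq[of "{..<n}" k] by simp
qed

lemma tidxD1: "I \<in> tidx n k \<Longrightarrow> length I = k"
  unfolding tidx_def by simp

lemma tidxD2: assumes "I \<in> tidx n k" "x < k" shows "I ! x < n"
proof -
  have "I ! x \<in> set I" using assms by (simp add: tidx_def)
  thus ?thesis using assms(1) by (auto simp: tidx_def)
qed

lemmas tidxD = tidxD1 tidxD2

lemma tidxI: "length I = k \<Longrightarrow> (\<And>x. x < k \<Longrightarrow> I ! x < n) \<Longrightarrow> I \<in> tidx n k"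
  by (auto simp: tidx_def in_set_conv_nth)

lemma swap_length[simp]: "length (swap_idx a I) = length I"
  by (simp add: swap_idx_def)

lemma swap_nth: "Suc a < length I \<Longrightarrow> x < length I \<Longrightarrow> swap_idx a I ! x = I ! (transpose a (Suc a) x)"
  by (cases "x = a"; cases "x = Suc a") (simp_all add: swap_idx_def nth_list_update)

lemma transpose_lt: "Suc a < k \<Longrightarrow> x < k \<Longrightarrow> transpose a (Suc a) x < k"
  by (auto simp: transpose_def)

lemma swap_swap[simp]: "Suc a < length I \<Longrightarrow> swap_idx a (swap_idx a I) = I"
proof (rule nth_equalityI)
  fix x assume a: "Suc a < length I" and x: "x < length (swap_idx a (swap_idx a I))"
  hence x': "x < length I" by simp
  show "swap_idx a (swap_idx a I) ! x = I ! x"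
    using a x' transpose_lt[OF a x'] by (simp add: swap_nth)
qed simp

lemma swap_tidx: "I \<in> tidx n k \<Longrightarrow> Suc a < k \<Longrightarrow> swap_idx a I \<in> tidx n k"
  apply (rule tidxI)
   apply (simp add: tidxD)
  apply (simp add: swap_nth tidxD)
  apply (rule tidxD(2), assumption)
  apply (auto simp: transpose_def)
  done

lemma swap_eq_iff: assumes "Suc a < length I" "length L = length I"
  shows "(L = swap_idx a I) = (I = swap_idx a L)"
proof
  assume "L = swap_idx a I" thus "I = swap_idx a L" using assms(1) by simp
next
  assume h: "I = swap_idx a L"
  have "Suc a < length L" using assms by simp
  hence "swap_idx a I = L" unfolding h by (rule swap_swap)
  thus "L = swap_idx a I" by simp
qed

lemma sum_Pswap:
  assumes "I \<in> tidx n k" "Suc a < k"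
  shows "(\<Sum>L\<in>tidx n k. Pswap q a I L * B L) = q (I ! Suc a) (I ! a) * B (swap_idx a I)"
proof -
  have "(\<Sum>L\<in>tidx n k. Pswap q a I L * B L) = (\<Sum>L\<in>tidx n k. if L = swap_idx a I then q (I ! Suc a) (I ! a) * B L else 0)"
    by (intro sum.cong refl) (simp add: Pswap_def)
  also have "\<dots> = q (I ! Suc a) (I ! a) * B (swap_idx a I)"
    using swap_tidx[OF assms] by (simp add: sum.delta')
  finally show ?thesis .
qed

lemma tmul_Pswap:
  assumes "I \<in> tidx n k" "Suc a < k"
  shows "tmul n k (Pswap q a) B I J = q (I ! Suc a) (I ! a) * B (swap_idx a I) J"
  using sum_Pswap[OF assms, of q "\<lambda>L. B L J"] by (simp add: tmul_def)

lemma Pword_Nil: "Pword q n k [] = tid" by (simp add: Pword_def)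
lemma Pword_Cons: "Pword q n k (a # w) = tmul n k (Pswap q a) (Pword q n k w)"
  by (simp add: Pword_def)

definition valid :: "nat \<Rightarrow> nat list \<Rightarrow> bool" where
  "valid k w \<longleftrightarrow> (\<forall>a\<in>set w. Suc a < k)"

lemma perm_of_word_Nil[simp]: "perm_of_word [] = id" by (simp add: perm_of_word_def)
lemma perm_of_word_Cons[simp]: "perm_of_word (a # w) = transpose a (Suc a) \<circ> perm_of_word w"
  by (simp add: perm_of_word_def)
lemma perm_of_word_append[simp]: "perm_of_word (u @ w) = perm_of_word u \<circ> perm_of_word w"
  by (induction u) (auto simp: o_assoc)

lemma perm_of_word_permutes: "valid k w \<Longrightarrow> perm_of_word w permutes {..<k}"
  by (induction w) (auto simp: valid_def permutes_id intro!: permutes_compose permutes_swap_id)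

lemma perm_of_word_permutation: "permutation (perm_of_word w)"
proof (induction w)
  case (Cons a w)
  thus ?case unfolding perm_of_word_Cons by (rule permutation_compose[OF permutation_swap_id])
qed (simp add: permutation_id)

lemma sign_perm_of_word: "sign (perm_of_word w) = (-1) ^ length w"
proof (induction w)
  case (Cons a w)
  have "sign (perm_of_word (a # w)) = sign (transpose a (Suc a)) * sign (perm_of_word w)"
    unfolding perm_of_word_Cons by (rule sign_compose[OF permutation_swap_id perm_of_word_permutation])
  also have "\<dots> = (-1) ^ length (a # w)" using Cons by (simp add: sign_swap_id)
  finally show ?case .
qed simp

lemma transpose_word: "i < j \<Longrightarrow> j < k \<Longrightarrow> \<exists>w. valid k w \<and> perm_of_word w = transpose i j"
proof (induction "j - i" arbitrary: i)
  case 0 thus ?case by simp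
next
  case (Suc d)
  show ?case
  proof (cases "j = Suc i")
    case True
    have "perm_of_word [i] = transpose i j" using True by simp
    moreover have "valid k [i]" using Suc.prems True by (simp add: valid_def)
    ultimately show ?thesis by blast
  next
    case False
    have d: "d = j - Suc i" "Suc i < j" using Suc.hyps(2) Suc.prems False by auto
    obtain w where w: "valid k w" "perm_of_word w = transpose (Suc i) j"
      using Suc.hyps(1)[OF d(1) d(2) Suc.prems(2)] by blast
    have t: "transpose i (Suc i) \<circ> transpose (Suc i) j \<circ> transpose i (Suc i) = transpose i j"
      using False Suc.prems by (intro transpose_comp_triple) auto
    have "perm_of_word ([i] @ w @ [i]) = transpose i (Suc i) \<circ> transpose (Suc i) j \<circ> transpose i (Suc i)"
      by (simp only: perm_of_word_append perm_of_word_Cons perm_of_word_Nil w o_id o_assoc)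
    moreover have "valid k ([i] @ w @ [i])" using w(1) Suc.prems by (auto simp: valid_def)
    ultimately show ?thesis using t by metis
  qed
qed

lemma perm_word_exists:
  assumes "\<sigma> permutes {..<k}" shows "\<exists>w. valid k w \<and> perm_of_word w = \<sigma>"
  using assms finite_lessThan
proof (induction rule: permutes_induct)
  case id
  then show ?case by (intro exI[of _ "[]"]) (auto simp: valid_def)
next
  case (swap a b p)
  then obtain w where w: "valid k w" "perm_of_word w = p" by blast
  obtain u where u: "valid k u" "perm_of_word u = transpose a b"
  proof (cases "a < b")
    case True thus ?thesis using that transpose_word[of a b k] swap.hyps by auto
  next
    case False thus ?thesis using that transpose_word[of b a k] swap.hyps
      by (auto simp: transpose_commute)
  qed
  show ?case using w u by (intro exI[of _ "u @ w"]) (auto simp: valid_def)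
qed



definition invs :: "nat \<Rightarrow> (nat \<Rightarrow> nat) \<Rightarrow> (nat \<times> nat) set" where
  "invs k \<sigma> = {(x,y). x < y \<and> y < k \<and> \<sigma> y < \<sigma> x}"

lemma finite_invs[simp]: "finite (invs k \<sigma>)"
  by (rule finite_subset[of _ "{..<k} \<times> {..<k}"]) (auto simp: invs_def)

definition Cf :: "(nat \<Rightarrow> nat \<Rightarrow> complex) \<Rightarrow> nat \<Rightarrow> (nat \<Rightarrow> nat) \<Rightarrow> nat list \<Rightarrow> nat list \<Rightarrow> complex" where
  "Cf q k \<sigma> I J = (if J = map (\<lambda>x. I ! \<sigma> x) [0..<k] then (\<Prod>(x,y)\<in>invs k \<sigma>. q (I ! \<sigma> x) (I ! \<sigma> y)) else 0)"

lemma transpose_order: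
  assumes "u \<noteq> v" "\<not> (u = a \<and> v = Suc a)" "\<not> (u = Suc a \<and> v = a)"
  shows "(transpose a (Suc a) v < transpose a (Suc a) u) = (v < u)"
  using assms by (auto simp: transpose_def)

lemma invs_step:
  fixes g :: "nat \<Rightarrow> nat \<Rightarrow> complex"
  assumes \<sigma>: "\<sigma> permutes {..<k}" and a: "Suc a < k" and g: "g a (Suc a) * g (Suc a) a = 1"
  defines "\<tau> \<equiv> transpose a (Suc a)"
  shows "g (Suc a) a * (\<Prod>(x,y)\<in>invs k \<sigma>. g (\<tau> (\<sigma> x)) (\<tau> (\<sigma> y)))
       = (\<Prod>(x,y)\<in>invs k (\<tau> \<circ> \<sigma>). g (\<tau> (\<sigma> x)) (\<tau> (\<sigma> y)))"
proof -
  have img: "\<sigma> ` {..<k} = {..<k}" using permutes_image[OF \<sigma>] .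
  have "a \<in> \<sigma> ` {..<k}" using img a by simp
  then obtain x0 where x0: "x0 < k" "\<sigma> x0 = a" by auto
  have "Suc a \<in> \<sigma> ` {..<k}" using img a by simp
  then obtain y0 where y0: "y0 < k" "\<sigma> y0 = Suc a" by auto
  have inj: "inj \<sigma>" using permutes_inj[OF \<sigma>] .
  have xy0: "x0 \<noteq> y0" using x0 y0 by auto
  have ha: "\<sigma> x = a \<longleftrightarrow> x = x0" for x
  proof -
    have "\<sigma> x = \<sigma> x0 \<longleftrightarrow> x = x0" by (rule inj_eq[OF inj])
    thus ?thesis using x0(2) by simp
  qed
  have hb: "\<sigma> x = Suc a \<longleftrightarrow> x = y0" for x
  proof -
    have "\<sigma> x = \<sigma> y0 \<longleftrightarrow> x = y0" by (rule inj_eq[OF inj])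
    thus ?thesis using y0(2) by simp
  qed
  have key: "(\<tau> (\<sigma> y) < \<tau> (\<sigma> x)) = (\<sigma> y < \<sigma> x)"
    if "x \<noteq> y" "\<not> ((x = x0 \<and> y = y0) \<or> (x = y0 \<and> y = x0))" for x y
  proof -
    have "\<sigma> x \<noteq> \<sigma> y" using that(1) by (simp add: inj_eq[OF inj])
    moreover have "\<not> (\<sigma> x = a \<and> \<sigma> y = Suc a)"
      using that(2) by (simp add: ha hb)
    moreover have "\<not> (\<sigma> x = Suc a \<and> \<sigma> y = a)"
      using that(2) by (simp add: ha hb)
    ultimately show ?thesis unfolding \<tau>_def by (rule transpose_order)
  qed
  have tx0: "\<tau> (\<sigma> x0) = Suc a" and ty0: "\<tau> (\<sigma> y0) = a" using x0 y0 by (simp_all add: \<tau>_def)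
  show ?thesis
  proof (cases "x0 < y0")
    case True
    have eq: "invs k (\<tau> \<circ> \<sigma>) = insert (x0,y0) (invs k \<sigma>)"
    proof (intro set_eqI iffI)
      fix p assume "p \<in> invs k (\<tau> \<circ> \<sigma>)"
      then obtain x y where p: "p = (x,y)" "x<y" "y<k" "\<tau> (\<sigma> y) < \<tau> (\<sigma> x)" by (auto simp: invs_def)
      show "p \<in> insert (x0,y0) (invs k \<sigma>)"
      proof (cases "(x = x0 \<and> y = y0) \<or> (x = y0 \<and> y = x0)")
        case True2: True
        hence "x = x0 \<and> y = y0" using p(2) True by auto
        thus ?thesis using p by simp
      next
        case False
        moreover have "x \<noteq> y" using p(2) by simp
        ultimately show ?thesis using key[of x y] p by (simp add: invs_def)
      qed
    next
      fix p assume h: "p \<in> insert (x0,y0) (invs k \<sigma>)"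
      show "p \<in> invs k (\<tau> \<circ> \<sigma>)"
      proof (cases "p = (x0,y0)")
        case True thus ?thesis using True tx0 ty0 y0 \<open>x0 < y0\<close> by (simp add: invs_def)
      next
        case False
        then obtain x y where p: "p = (x,y)" "x<y" "y<k" "\<sigma> y < \<sigma> x" using h by (auto simp: invs_def)
        have "\<not> ((x = x0 \<and> y = y0) \<or> (x = y0 \<and> y = x0))"
        proof
          assume "(x = x0 \<and> y = y0) \<or> (x = y0 \<and> y = x0)"
          hence "x = x0 \<and> y = y0" using p(2) \<open>x0 < y0\<close> by auto
          thus False using p(4) x0 y0 by simp
        qed
        moreover have "x \<noteq> y" using p(2) by simp
        ultimately show ?thesis using key[of x y] p by (simp add: invs_def)
      qed
    qed
    have nin: "(x0,y0) \<notin> invs k \<sigma>" using x0 y0 by (simp add: invs_def)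
    show ?thesis unfolding eq using nin tx0 ty0 by simp
  next
    case False
    hence lt: "y0 < x0" using xy0 by simp
    have eq: "invs k \<sigma> = insert (y0,x0) (invs k (\<tau> \<circ> \<sigma>))"
    proof (intro set_eqI iffI)
      fix p assume "p \<in> invs k \<sigma>"
      then obtain x y where p: "p = (x,y)" "x<y" "y<k" "\<sigma> y < \<sigma> x" by (auto simp: invs_def)
      show "p \<in> insert (y0,x0) (invs k (\<tau> \<circ> \<sigma>))"
      proof (cases "(x = x0 \<and> y = y0) \<or> (x = y0 \<and> y = x0)")
        case True
        hence "x = y0 \<and> y = x0" using p(2) lt by auto
        thus ?thesis using p by simp
      next
        case False
        moreover have "x \<noteq> y" using p(2) by simp
        ultimately show ?thesis using key[of x y] p by (simp add: invs_def)
      qed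
    next
      fix p assume h: "p \<in> insert (y0,x0) (invs k (\<tau> \<circ> \<sigma>))"
      show "p \<in> invs k \<sigma>"
      proof (cases "p = (y0,x0)")
        case True thus ?thesis using x0 y0 lt by (simp add: invs_def)
      next
        case False
        then obtain x y where p: "p = (x,y)" "x<y" "y<k" "\<tau> (\<sigma> y) < \<tau> (\<sigma> x)" using h by (auto simp: invs_def)
        have "\<not> ((x = x0 \<and> y = y0) \<or> (x = y0 \<and> y = x0))"
        proof
          assume "(x = x0 \<and> y = y0) \<or> (x = y0 \<and> y = x0)"
          hence "x = y0 \<and> y = x0" using p(2) lt by auto
          thus False using p(4) tx0 ty0 by simp
        qed
        moreover have "x \<noteq> y" using p(2) by simp
        ultimately show ?thesis using key[of x y] p by (simp add: invs_def)
      qed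
    qed
    have nin: "(y0,x0) \<notin> invs k (\<tau> \<circ> \<sigma>)" using tx0 ty0 by (simp add: invs_def)
    have "(\<Prod>(x,y)\<in>invs k \<sigma>. g (\<tau> (\<sigma> x)) (\<tau> (\<sigma> y)))
        = g a (Suc a) * (\<Prod>(x,y)\<in>invs k (\<tau> \<circ> \<sigma>). g (\<tau> (\<sigma> x)) (\<tau> (\<sigma> y)))"
      unfolding eq using nin tx0 ty0 by simp
    thus ?thesis using g by (simp add: mult.assoc[symmetric] mult.commute)
  qed
qed



lemma param_inv: "is_parametric n q \<Longrightarrow> i < n \<Longrightarrow> j < n \<Longrightarrow> q i j * q j i = 1"
  by (simp add: is_parametric_def)

lemma param_diag: "is_parametric n q \<Longrightarrow> i < n \<Longrightarrow> q i i = 1"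
  by (simp add: is_parametric_def)

lemma Pword_closed:
  assumes "valid k w" "is_parametric n q" "I \<in> tidx n k"
  shows "Pword q n k w I J = Cf q k (perm_of_word w) I J"
  using assms
proof (induction w arbitrary: I)
  case Nil
  have len: "length I = k" using tidxD1[OF Nil.prems(3)] .
  have m: "map (\<lambda>x. I ! id x) [0..<k] = I" using len map_nth[of I] by simp
  have e: "invs k id = {}" by (auto simp: invs_def)
  show ?case unfolding Pword_Nil perm_of_word_Nil Cf_def m e tid_def by auto
next
  case (Cons a w)
  have a: "Suc a < k" and vw: "valid k w" using Cons.prems(1) by (auto simp: valid_def)
  define \<sigma> where "\<sigma> = perm_of_word w"
  define \<tau> where "\<tau> = transpose a (Suc a)"
  define I' where "I' = swap_idx a I"
  have I: "I \<in> tidx n k" using Cons.prems(3) .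
  have len: "length I = k" using tidxD1[OF I] .
  have I': "I' \<in> tidx n k" unfolding I'_def using swap_tidx[OF I a] .
  have \<sigma>: "\<sigma> permutes {..<k}" unfolding \<sigma>_def using perm_of_word_permutes[OF vw] .
  have \<sigma>lt: "\<sigma> x < k" if "x < k" for x using permutes_in_image[OF \<sigma>] that by simp
  have I'nth: "I' ! x = I ! \<tau> x" if "x < k" for x
    unfolding I'_def \<tau>_def using swap_nth[of a I x] a len that by simp
  have "Pword q n k (a # w) I J = q (I ! Suc a) (I ! a) * Pword q n k w I' J"
    unfolding Pword_Cons I'_def using tmul_Pswap[OF I a] by simp
  also have "\<dots> = q (I ! Suc a) (I ! a) * Cf q k \<sigma> I' J"
    unfolding \<sigma>_def using Cons.IH[OF vw Cons.prems(2) I'] by simp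
  also have "\<dots> = Cf q k (\<tau> \<circ> \<sigma>) I J"
  proof -
    have m: "map (\<lambda>x. I' ! \<sigma> x) [0..<k] = map (\<lambda>x. I ! (\<tau> \<circ> \<sigma>) x) [0..<k]"
      by (rule map_cong) (simp_all add: I'nth \<sigma>lt)
    have pr: "(\<Prod>(x,y)\<in>invs k \<sigma>. q (I' ! \<sigma> x) (I' ! \<sigma> y))
            = (\<Prod>(x,y)\<in>invs k \<sigma>. q (I ! \<tau> (\<sigma> x)) (I ! \<tau> (\<sigma> y)))"
    proof (rule prod.cong[OF refl])
      fix p assume "p \<in> invs k \<sigma>"
      then obtain x y where p: "p = (x,y)" "x < k" "y < k" by (auto simp: invs_def)
      show "(case p of (x, y) \<Rightarrow> q (I' ! \<sigma> x) (I' ! \<sigma> y)) = (case p of (x, y) \<Rightarrow> q (I ! \<tau> (\<sigma> x)) (I ! \<tau> (\<sigma> y)))"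
        using p by (simp add: I'nth \<sigma>lt)
    qed
    have g: "q (I ! a) (I ! Suc a) * q (I ! Suc a) (I ! a) = 1"
      using param_inv[OF Cons.prems(2)] tidxD2[OF I] a by simp
    have st: "q (I ! Suc a) (I ! a) * (\<Prod>(x,y)\<in>invs k \<sigma>. q (I ! \<tau> (\<sigma> x)) (I ! \<tau> (\<sigma> y)))
       = (\<Prod>(x,y)\<in>invs k (\<tau> \<circ> \<sigma>). q (I ! \<tau> (\<sigma> x)) (I ! \<tau> (\<sigma> y)))"
      using invs_step[OF \<sigma> a, of "\<lambda>u v. q (I ! u) (I ! v)"] g unfolding \<tau>_def by simp
    show ?thesis unfolding Cf_def m pr using st by (simp add: comp_def)
  qed
  finally have "Pword q n k (a # w) I J = Cf q k (\<tau> \<circ> \<sigma>) I J" .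
  thus ?case by (simp only: \<sigma>_def \<tau>_def perm_of_word_Cons)
qed

lemma foldr_tmul:
  assumes "valid k w" "I \<in> tidx n k"
  shows "foldr (\<lambda>a B. tmul n k (Pswap q a) B) w B I J = (\<Sum>L\<in>tidx n k. Pword q n k w I L * B L J)"
  using assms
proof (induction w arbitrary: I)
  case Nil
  have "(\<Sum>L\<in>tidx n k. tid I L * B L J) = (\<Sum>L\<in>tidx n k. if L = I then B L J else 0)"
    by (rule sum.cong) (auto simp: tid_def)
  also have "\<dots> = B I J" using Nil.prems(2) by (simp add: sum.delta')
  finally show ?case by (simp add: Pword_Nil)
next
  case (Cons a w)
  have a: "Suc a < k" and vw: "valid k w" using Cons.prems(1) by (auto simp: valid_def)
  have I': "swap_idx a I \<in> tidx n k" using swap_tidx[OF Cons.prems(2) a] .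
  have "foldr (\<lambda>a B. tmul n k (Pswap q a) B) (a # w) B I J
      = q (I ! Suc a) (I ! a) * foldr (\<lambda>a B. tmul n k (Pswap q a) B) w B (swap_idx a I) J"
    using tmul_Pswap[OF Cons.prems(2) a] by simp
  also have "\<dots> = q (I ! Suc a) (I ! a) * (\<Sum>L\<in>tidx n k. Pword q n k w (swap_idx a I) L * B L J)"
    using Cons.IH[OF vw I'] by simp
  also have "\<dots> = (\<Sum>L\<in>tidx n k. Pword q n k (a # w) I L * B L J)"
    unfolding Pword_Cons using tmul_Pswap[OF Cons.prems(2) a]
    by (simp add: sum_distrib_left mult.assoc)
  finally show ?case .
qed

lemma Pword_snoc:
  assumes "valid k w" "Suc a < k" "I \<in> tidx n k" "J \<in> tidx n k"
  shows "Pword q n k (w @ [a]) I J = Pword q n k w I (swap_idx a J) * q (J ! a) (J ! Suc a)"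
proof -
  have lenJ: "length J = k" using tidxD1[OF assms(4)] .
  have "Pword q n k (w @ [a]) I J = foldr (\<lambda>a B. tmul n k (Pswap q a) B) w (tmul n k (Pswap q a) tid) I J"
    by (simp add: Pword_def)
  also have "\<dots> = (\<Sum>L\<in>tidx n k. Pword q n k w I L * tmul n k (Pswap q a) tid L J)"
    using foldr_tmul[OF assms(1,3)] .
  also have "\<dots> = (\<Sum>L\<in>tidx n k. if L = swap_idx a J then Pword q n k w I L * q (J ! a) (J ! Suc a) else 0)"
  proof (rule sum.cong[OF refl])
    fix L assume L: "L \<in> tidx n k"
    have lenL: "length L = k" using tidxD1[OF L] .
    have t: "tmul n k (Pswap q a) tid L J = q (L ! Suc a) (L ! a) * tid (swap_idx a L) J"
      using tmul_Pswap[OF L assms(2)] .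
    have iff: "(swap_idx a L = J) = (L = swap_idx a J)"
      using swap_eq_iff[of a J L] assms(2) lenJ lenL by auto
    show "Pword q n k w I L * tmul n k (Pswap q a) tid L J
        = (if L = swap_idx a J then Pword q n k w I L * q (J ! a) (J ! Suc a) else 0)"
    proof (cases "L = swap_idx a J")
      case True
      have "L ! Suc a = J ! a" "L ! a = J ! Suc a"
        using True swap_nth[of a J] assms(2) lenJ by simp_all
      thus ?thesis using t True iff by (simp add: tid_def)
    next
      case False thus ?thesis using t iff by (simp add: tid_def)
    qed
  qed
  also have "\<dots> = Pword q n k w I (swap_idx a J) * q (J ! a) (J ! Suc a)"
    using swap_tidx[OF assms(4,2)] by (simp add: sum.delta')
  finally show ?thesis .
qed

lemma Cf_snoc:
  assumes "\<sigma> permutes {..<k}" "Suc a < k" "I \<in> tidx n k" "J \<in> tidx n k" "is_parametric n q"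
  shows "Cf q k (\<sigma> \<circ> transpose a (Suc a)) I J = Cf q k \<sigma> I (swap_idx a J) * q (J ! a) (J ! Suc a)"
proof -
  obtain w where w: "valid k w" "perm_of_word w = \<sigma>" using perm_word_exists[OF assms(1)] by blast
  have vw': "valid k (w @ [a])" using w(1) assms(2) by (simp add: valid_def)
  have p: "perm_of_word (w @ [a]) = \<sigma> \<circ> transpose a (Suc a)" using w(2) by simp
  have "Cf q k (\<sigma> \<circ> transpose a (Suc a)) I J = Pword q n k (w @ [a]) I J"
    using Pword_closed[OF vw' assms(5,3)] p by simp
  also have "\<dots> = Pword q n k w I (swap_idx a J) * q (J ! a) (J ! Suc a)"
    using Pword_snoc[OF w(1) assms(2,3,4)] .
  also have "\<dots> = Cf q k \<sigma> I (swap_idx a J) * q (J ! a) (J ! Suc a)"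
    using Pword_closed[OF w(1) assms(5,3)] w(2) by simp
  finally show ?thesis .
qed

lemma Pperm_word:
  assumes "\<sigma> permutes {..<k}"
  obtains w where "valid k w" "perm_of_word w = \<sigma>" "Pperm q n k \<sigma> = Pword q n k w"
proof -
  let ?P = "\<lambda>w. (\<forall>a\<in>set w. Suc a < k) \<and> perm_of_word w = \<sigma>"
  have ex: "\<exists>w. ?P w" using perm_word_exists[OF assms] by (auto simp: valid_def)
  have "?P (SOME w. ?P w)" using someI_ex[OF ex] .
  thus ?thesis using that[of "SOME w. ?P w"] by (simp add: Pperm_def valid_def)
qed

lemma Pperm_closed:
  assumes "\<sigma> permutes {..<k}" "I \<in> tidx n k" "is_parametric n q"
  shows "Pperm q n k \<sigma> I J = Cf q k \<sigma> I J"
proof -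
  obtain w where w: "valid k w" "perm_of_word w = \<sigma>" "Pperm q n k \<sigma> = Pword q n k w"
    using Pperm_word[OF assms(1)] .
  show ?thesis using Pword_closed[OF w(1) assms(3,2)] w by simp
qed

lemma Aq_closed:
  assumes "I \<in> tidx n k" "is_parametric n q"
  shows "Aq q n k I J = (1 / fact k) * (\<Sum>\<sigma>\<in>{\<sigma>. \<sigma> permutes {..<k}}. of_int (sign \<sigma>) * Cf q k \<sigma> I J)"
  unfolding Aq_def using Pperm_closed[OF _ assms(1,2)] by simp

lemma Aq_antisym:
  assumes "I \<in> tidx n k" "J \<in> tidx n k" "Suc a < k" "is_parametric n q"
  shows "Aq q n k I (swap_idx a J) * q (J ! a) (J ! Suc a) = - Aq q n k I J"
proof -
  define S where "S = {\<sigma>. \<sigma> permutes {..<k}}"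
  define \<tau> where "\<tau> = transpose a (Suc a)"
  have \<tau>: "\<tau> permutes {..<k}" unfolding \<tau>_def using assms(3) by (intro permutes_swap_id) auto
  have sg: "sign (\<sigma> \<circ> \<tau>) = - sign \<sigma>" if "\<sigma> \<in> S" for \<sigma>
  proof -
    have "permutation \<sigma>" using that permutes_imp_permutation[of "{..<k}" \<sigma>] by (simp add: S_def)
    thus ?thesis unfolding \<tau>_def by (simp add: sign_compose permutation_swap_id sign_swap_id)
  qed
  have "Aq q n k I (swap_idx a J) * q (J ! a) (J ! Suc a)
      = (1 / fact k) * (\<Sum>\<sigma>\<in>S. of_int (sign \<sigma>) * (Cf q k \<sigma> I (swap_idx a J) * q (J ! a) (J ! Suc a)))"
    unfolding Aq_closed[OF assms(1,4)] S_def by (simp add: sum_distrib_right mult.assoc)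
  also have "\<dots> = (1 / fact k) * (\<Sum>\<sigma>\<in>S. - (of_int (sign (\<sigma> \<circ> \<tau>)) * Cf q k (\<sigma> \<circ> \<tau>) I J))"
  proof -
    have "(\<Sum>\<sigma>\<in>S. of_int (sign \<sigma>) * (Cf q k \<sigma> I (swap_idx a J) * q (J ! a) (J ! Suc a)))
        = (\<Sum>\<sigma>\<in>S. - (of_int (sign (\<sigma> \<circ> \<tau>)) * Cf q k (\<sigma> \<circ> \<tau>) I J))"
    proof (rule sum.cong[OF refl])
      fix \<sigma> assume s: "\<sigma> \<in> S"
      have "Cf q k (\<sigma> \<circ> \<tau>) I J = Cf q k \<sigma> I (swap_idx a J) * q (J ! a) (J ! Suc a)"
        unfolding \<tau>_def using Cf_snoc[OF _ assms(3,1,2,4), of \<sigma>] s by (simp add: S_def)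
      thus "of_int (sign \<sigma>) * (Cf q k \<sigma> I (swap_idx a J) * q (J ! a) (J ! Suc a))
          = - (of_int (sign (\<sigma> \<circ> \<tau>)) * Cf q k (\<sigma> \<circ> \<tau>) I J)"
        using sg[OF s] by simp
    qed
    thus ?thesis by simp
  qed
  also have "\<dots> = (1 / fact k) * (\<Sum>\<sigma>\<in>S. - (of_int (sign \<sigma>) * Cf q k \<sigma> I J))"
  proof -
    have "(\<Sum>\<sigma>\<in>S. - (of_int (sign (\<sigma> \<circ> \<tau>)) * Cf q k (\<sigma> \<circ> \<tau>) I J))
        = (\<Sum>\<sigma>\<in>S. - (of_int (sign \<sigma>) * Cf q k \<sigma> I J))"
    proof -
      have tt: "\<tau> \<circ> \<tau> = id" by (simp add: \<tau>_def)
      show ?thesis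
        apply (rule sum.reindex_bij_witness[of _ "\<lambda>\<sigma>. \<sigma> \<circ> \<tau>" "\<lambda>\<sigma>. \<sigma> \<circ> \<tau>"])
            apply (simp_all add: S_def tt o_assoc[symmetric] permutes_compose[OF \<tau>])
        done
    qed
    thus ?thesis by simp
  qed
  also have "\<dots> = - Aq q n k I J"
    unfolding Aq_closed[OF assms(1,4)] S_def by (simp add: sum_negf)
  finally show ?thesis .
qed



lemma Aq_rep:
  assumes "I \<in> tidx n k" "J \<in> tidx n k" "x < y" "y < k" "J ! x = J ! y" "is_parametric n q"
  shows "Aq q n k I J = 0"
  using assms
proof (induction "y - x" arbitrary: x J)
  case 0 thus ?case by simp
next
  case (Suc d)
  have a: "Suc x < k" using Suc.prems by simp
  have lenJ: "length J = k" using tidxD1[OF Suc.prems(2)] .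
  have anti: "Aq q n k I (swap_idx x J) * q (J ! x) (J ! Suc x) = - Aq q n k I J"
    using Aq_antisym[OF Suc.prems(1,2) a Suc.prems(6)] .
  show ?case
  proof (cases "y = Suc x")
    case True
    have eqs: "J ! Suc x = J ! x" using True Suc.prems(5) by simp
    have sJ: "swap_idx x J = J"
    proof (rule nth_equalityI)
      show "length (swap_idx x J) = length J" by simp
      fix z assume "z < length (swap_idx x J)"
      hence z: "z < length J" by simp
      have "swap_idx x J ! z = J ! transpose x (Suc x) z" using swap_nth[of x J z] a lenJ z by simp
      also have "\<dots> = J ! z"
        by (cases "z = x"; cases "z = Suc x") (simp_all add: eqs)
      finally show "swap_idx x J ! z = J ! z" .
    qed
    have "q (J ! x) (J ! Suc x) = 1"
      using param_diag[OF Suc.prems(6) tidxD2[OF Suc.prems(2)], of x] Suc.prems(3,4) eqs by simp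
    hence "Aq q n k I J = - Aq q n k I J" using anti sJ by simp
    thus ?thesis by simp
  next
    case False
    define J' where "J' = swap_idx x J"
    have J': "J' \<in> tidx n k" unfolding J'_def using swap_tidx[OF Suc.prems(2) a] .
    have e1: "J' ! Suc x = J ! x" unfolding J'_def using swap_nth[of x J "Suc x"] a lenJ by simp
    have e2: "J' ! y = J ! y" unfolding J'_def using swap_nth[of x J y] a lenJ Suc.prems(3,4) False by simp
    have "Aq q n k I J' = 0"
      using Suc.hyps(1)[of "Suc x" J'] Suc.hyps(2) Suc.prems False J' e1 e2 by simp
    thus ?thesis using anti unfolding J'_def by simp
  qed
qed

lemma Aq_vanish:
  assumes "n < k" "I \<in> tidx n k" "J \<in> tidx n k" "is_parametric n q"
  shows "Aq q n k I J = 0"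
proof -
  have lenJ: "length J = k" using tidxD1[OF assms(3)] .
  have sub: "set J \<subseteq> {..<n}" using assms(3) by (simp add: tidx_def)
  have "\<not> distinct J"
  proof
    assume "distinct J"
    hence "card (set J) = k" using distinct_card lenJ by metis
    moreover have "card (set J) \<le> n" using card_mono[OF finite_lessThan sub] by simp
    ultimately show False using assms(1) by simp
  qed
  then obtain i j where ij: "i < k" "j < k" "i \<noteq> j" "J ! i = J ! j"
    unfolding distinct_conv_nth lenJ by blast
  show ?thesis
  proof (cases "i < j")
    case True show ?thesis using Aq_rep[OF assms(2,3) True ij(2) ij(4) assms(4)] .
  next
    case False
    hence "j < i" using ij(3) by simp
    thus ?thesis using Aq_rep[OF assms(2,3) _ ij(1) ij(4)[symmetric] assms(4)] by simp
  qed
qed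

lemma ek_vanish:
  assumes "n < k" "is_parametric n q"
  shows "ek q n k X = 0"
proof -
  have "k \<noteq> 0" using assms by simp
  moreover have "\<And>I J. I \<in> tidx n k \<Longrightarrow> J \<in> tidx n k \<Longrightarrow> Aq q n k I J = 0"
    using Aq_vanish[OF assms(1) _ _ assms(2)] by blast
  ultimately show ?thesis unfolding ek_def by simp
qed

definition tp :: "(nat \<Rightarrow> nat \<Rightarrow> 'a::cplx_algebra_1) \<Rightarrow> nat \<Rightarrow> nat list \<Rightarrow> nat list \<Rightarrow> 'a" where
  "tp X k J L = prod_list (map (\<lambda>a. X (J ! a) (L ! a)) [0..<k])"

lemma ek_tp: "k \<noteq> 0 \<Longrightarrow> ek q n k X = (\<Sum>I\<in>tidx n k. \<Sum>J\<in>tidx n k. scaleC (Aq q n k I J) (tp X k J I))"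
  by (simp add: ek_def tp_def)

lemma upt_split3:
  assumes "Suc a < k"
  shows "[0..<k] = [0..<a] @ a # Suc a # [Suc (Suc a)..<k]"
proof -
  have "[0..<a + (k - a)] = [0..<a] @ [a..<a + (k - a)]" by (rule upt_add_eq_append) simp
  moreover have "a + (k - a) = k" using assms by simp
  moreover have "[a..<k] = a # Suc a # [Suc (Suc a)..<k]" using assms by (simp add: upt_conv_Cons)
  ultimately show ?thesis by simp
qed

lemma tp_split:
  assumes "Suc a < k"
  shows "prod_list (map f [0..<k]) = prod_list (map f [0..<a]) * (f a * f (Suc a)) * prod_list (map f [Suc (Suc a)..<k])"
  unfolding upt_split3[OF assms] by (simp add: mult.assoc)



definition gfun :: "(nat \<Rightarrow> nat \<Rightarrow> complex) \<Rightarrow> (nat \<Rightarrow> nat \<Rightarrow> complex) \<Rightarrow> (nat \<Rightarrow> nat \<Rightarrow> 'a::cplx_algebra_1)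
   \<Rightarrow> nat \<Rightarrow> nat \<Rightarrow> nat \<Rightarrow> nat \<Rightarrow> 'a" where
  "gfun q p M i j kk l = M i kk * M j l + scaleC (p kk l) (M i l * M j kk)
     - scaleC (q j i) (M j kk * M i l + scaleC (p kk l) (M j l * M i kk))"

lemma gfun_lt:
  assumes "i < j" "j < n" "kk < m" "l < m" "is_parametric n q" "is_parametric m p" "manin q p n m M"
  shows "gfun q p M i j kk l = 0"
proof -
  have R1: "\<And>i j k. i < j \<Longrightarrow> j < n \<Longrightarrow> k < m \<Longrightarrow> M i k * M j k = scaleC (q j i) (M j k * M i k)"
    using assms(7) by (simp add: manin_def)
  have R2: "\<And>i j k l. i < j \<Longrightarrow> j < n \<Longrightarrow> k < l \<Longrightarrow> l < m \<Longrightarrow>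
        M i k * M j l - scaleC (q j i * p k l) (M j l * M i k)
        + scaleC (p k l) (M i l * M j k) - scaleC (q j i) (M j k * M i l) = 0"
    using assms(7) unfolding manin_def by blast
  consider "kk < l" | "kk = l" | "l < kk" by linarith
  thus ?thesis
  proof cases
    case 1
    have "gfun q p M i j kk l = M i kk * M j l - scaleC (q j i * p kk l) (M j l * M i kk)
        + scaleC (p kk l) (M i l * M j kk) - scaleC (q j i) (M j kk * M i l)"
      unfolding gfun_def scaleC_add_right scaleC_scaleC by (simp add: algebra_simps)
    thus ?thesis using R2[OF assms(1,2) 1 assms(4)] by simp
  next
    case 2
    have p1: "p l l = 1" using param_diag[OF assms(6,4)] .
    show ?thesis unfolding gfun_def 2 p1 scaleC_one R1[OF assms(1,2) assms(4)] scaleC_add_right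
      by simp
  next
    case 3
    have R: "M i l * M j kk - scaleC (q j i * p l kk) (M j kk * M i l)
        + scaleC (p l kk) (M i kk * M j l) - scaleC (q j i) (M j l * M i kk) = 0"
      using R2[OF assms(1,2) 3 assms(3)] .
    have c2: "p kk l * p l kk = 1" using param_inv[OF assms(6,3,4)] .
    have c1: "p kk l * (q j i * p l kk) = q j i" using c2 by (simp add: ac_simps)
    have c3: "p kk l * q j i = q j i * p kk l" by (simp add: ac_simps)
    have e1: "scaleC (p kk l) (M i l * M j kk - scaleC (q j i * p l kk) (M j kk * M i l)
        + scaleC (p l kk) (M i kk * M j l) - scaleC (q j i) (M j l * M i kk))
      = scaleC (p kk l) (M i l * M j kk) - scaleC (q j i) (M j kk * M i l)
        + M i kk * M j l - scaleC (q j i * p kk l) (M j l * M i kk)"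
      by (simp only: scaleC_add_right scaleC_diff_right scaleC_scaleC c1 c2 c3 scaleC_one)
    have e2: "gfun q p M i j kk l = scaleC (p kk l) (M i l * M j kk) - scaleC (q j i) (M j kk * M i l)
        + M i kk * M j l - scaleC (q j i * p kk l) (M j l * M i kk)"
      unfolding gfun_def scaleC_add_right scaleC_scaleC by (simp add: algebra_simps)
    show ?thesis using e1 e2 R by simp
  qed
qed

lemma gfun_zero:
  assumes "i < n" "j < n" "kk < m" "l < m" "is_parametric n q" "is_parametric m p" "manin q p n m M"
  shows "gfun q p M i j kk l = 0"
proof -
  consider "i < j" | "i = j" | "j < i" by linarith
  thus ?thesis
  proof cases
    case 1 thus ?thesis using gfun_lt assms by blast
  next
    case 2
    have "q i i = 1" using param_diag[OF assms(5,1)] .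
    thus ?thesis unfolding gfun_def 2 by (simp add: scaleC_one)
  next
    case 3
    have z: "gfun q p M j i kk l = 0" using gfun_lt[OF 3 assms(1,3,4,5,6,7)] .
    have c1: "q j i * q i j = 1" using param_inv[OF assms(5,2,1)] .
    have c2: "q j i * (q i j * p kk l) = p kk l" using c1 by (simp add: ac_simps)
    have e: "scaleC (q j i) (gfun q p M j i kk l) = scaleC (q j i) (M j kk * M i l)
        + scaleC (q j i * p kk l) (M j l * M i kk) - M i kk * M j l - scaleC (p kk l) (M i l * M j kk)"
      unfolding gfun_def
      by (simp only: scaleC_add_right scaleC_diff_right scaleC_scaleC c1 c2 scaleC_one diff_diff_eq)
    have "gfun q p M i j kk l = - scaleC (q j i) (gfun q p M j i kk l)"
      unfolding e unfolding gfun_def scaleC_add_right scaleC_scaleC by (simp add: algebra_simps)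
    thus ?thesis using z by simp
  qed
qed



lemma swap_nth_other: "Suc a < length J \<Longrightarrow> x < length J \<Longrightarrow> x \<noteq> a \<Longrightarrow> x \<noteq> Suc a \<Longrightarrow> swap_idx a J ! x = J ! x"
  by (simp add: swap_nth)
lemma swap_nth_a: "Suc a < length J \<Longrightarrow> swap_idx a J ! a = J ! Suc a"
  by (simp add: swap_nth)
lemma swap_nth_Sa: "Suc a < length J \<Longrightarrow> swap_idx a J ! Suc a = J ! a"
  by (simp add: swap_nth)

lemma tp_decomp:
  assumes "Suc a < k"
  shows "tp M k J L = prod_list (map (\<lambda>x. M (J!x) (L!x)) [0..<a]) * (M (J!a) (L!a) * M (J!Suc a) (L!Suc a))
     * prod_list (map (\<lambda>x. M (J!x) (L!x)) [Suc (Suc a)..<k])"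
  unfolding tp_def using tp_split[OF assms, of "\<lambda>x. M (J!x) (L!x)"] by simp

lemma tp_decomp_swap:
  assumes "Suc a < k" "length J = k" "length L = k"
    and "J' = J \<or> J' = swap_idx a J" "L' = L \<or> L' = swap_idx a L"
  shows "tp M k J' L' = prod_list (map (\<lambda>x. M (J!x) (L!x)) [0..<a]) * (M (J'!a) (L'!a) * M (J'!Suc a) (L'!Suc a))
     * prod_list (map (\<lambda>x. M (J!x) (L!x)) [Suc (Suc a)..<k])"
proof -
  have J': "J' ! x = J ! x" if "x < k" "x \<noteq> a" "x \<noteq> Suc a" for x
    using assms(4) swap_nth_other[of a J x] assms(1,2) that by auto
  have L': "L' ! x = L ! x" if "x < k" "x \<noteq> a" "x \<noteq> Suc a" for x
    using assms(5) swap_nth_other[of a L x] assms(1,3) that by auto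
  have e1: "map (\<lambda>x. M (J'!x) (L'!x)) [0..<a] = map (\<lambda>x. M (J!x) (L!x)) [0..<a]"
    by (rule map_cong[OF refl]) (use assms(1) J' L' in simp)
  have e2: "map (\<lambda>x. M (J'!x) (L'!x)) [Suc (Suc a)..<k] = map (\<lambda>x. M (J!x) (L!x)) [Suc (Suc a)..<k]"
    by (rule map_cong[OF refl]) (use assms(1) J' L' in simp)
  show ?thesis using tp_decomp[OF assms(1), of M J' L'] unfolding e1 e2 .
qed

lemma G_zero:
  assumes "J \<in> tidx n k" "L \<in> tidx m k" "Suc a < k"
    and "is_parametric n q" "is_parametric m p" "manin q p n m M"
  shows "tp M k J L + scaleC (p (L!a) (L!Suc a)) (tp M k J (swap_idx a L))
     - scaleC (q (J!Suc a) (J!a)) (tp M k (swap_idx a J) L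
         + scaleC (p (L!a) (L!Suc a)) (tp M k (swap_idx a J) (swap_idx a L))) = 0"
proof -
  have lJ: "length J = k" using tidxD1[OF assms(1)] .
  have lL: "length L = k" using tidxD1[OF assms(2)] .
  define P where "P = prod_list (map (\<lambda>x. M (J!x) (L!x)) [0..<a])"
  define Q where "Q = prod_list (map (\<lambda>x. M (J!x) (L!x)) [Suc (Suc a)..<k])"
  define i where "i = J ! a"
  define j where "j = J ! Suc a"
  define kk where "kk = L ! a"
  define l where "l = L ! Suc a"
  have sa: "swap_idx a J ! a = j" "swap_idx a J ! Suc a = i" "swap_idx a L ! a = l" "swap_idx a L ! Suc a = kk"
    unfolding i_def j_def kk_def l_def using assms(3) lJ lL by (simp_all add: swap_nth_a swap_nth_Sa)
  have t1: "tp M k J L = P * (M i kk * M j l) * Q"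
    using tp_decomp_swap[OF assms(3) lJ lL, of J L M] unfolding P_def Q_def i_def j_def kk_def l_def by simp
  have t2: "tp M k J (swap_idx a L) = P * (M i l * M j kk) * Q"
    using tp_decomp_swap[OF assms(3) lJ lL, of J "swap_idx a L" M] sa unfolding P_def Q_def i_def j_def kk_def l_def by simp
  have t3: "tp M k (swap_idx a J) L = P * (M j kk * M i l) * Q"
    using tp_decomp_swap[OF assms(3) lJ lL, of "swap_idx a J" L M] sa unfolding P_def Q_def i_def j_def kk_def l_def by simp
  have t4: "tp M k (swap_idx a J) (swap_idx a L) = P * (M j l * M i kk) * Q"
    using tp_decomp_swap[OF assms(3) lJ lL, of "swap_idx a J" "swap_idx a L" M] sa unfolding P_def Q_def i_def j_def kk_def l_def by simp
  have g: "gfun q p M i j kk l = 0"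
    unfolding i_def j_def kk_def l_def
    by (rule gfun_zero[OF tidxD2[OF assms(1)] tidxD2[OF assms(1)] tidxD2[OF assms(2)] tidxD2[OF assms(2)] assms(4,5,6)])
       (use assms(3) in simp_all)
  have "tp M k J L + scaleC (p kk l) (tp M k J (swap_idx a L))
     - scaleC (q j i) (tp M k (swap_idx a J) L + scaleC (p kk l) (tp M k (swap_idx a J) (swap_idx a L)))
     = P * gfun q p M i j kk l * Q"
    unfolding t1 t2 t3 t4 gfun_def
    by (simp add: distrib_left distrib_right left_diff_distrib right_diff_distrib mult_scaleC_left mult_scaleC_right
          scaleC_add_right mult.assoc)
  thus ?thesis using g unfolding i_def j_def kk_def l_def by simp
qed

lemma half_zero: "(x::'a::cplx_algebra_1) + x = 0 \<Longrightarrow> x = 0"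
proof -
  assume h: "x + x = 0"
  have "scaleC (1/2) (x + x) = scaleC (1/2 + 1/2) x" by (simp only: scaleC_add_left scaleC_add_right)
  also have "\<dots> = x" by (simp add: scaleC_one)
  finally show ?thesis using h by simp
qed

lemma X_antisym:
  assumes "is_parametric n q" "is_parametric m p" "manin q p n m M"
    and "I \<in> tidx n k" "L \<in> tidx m k" "Suc a < k"
  shows "(\<Sum>J\<in>tidx n k. scaleC (Aq q n k I J) (tp M k J L))
       = - scaleC (p (L!a) (L!Suc a)) (\<Sum>J\<in>tidx n k. scaleC (Aq q n k I J) (tp M k J (swap_idx a L)))"
proof -
  define T where "T = tidx n k"
  define s where "s = swap_idx a"
  define c where "c = p (L!a) (L!Suc a)"
  define F where "F J = tp M k J L + scaleC c (tp M k J (s L))" for J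
  define S0 where "S0 = (\<Sum>J\<in>T. scaleC (Aq q n k I J) (F J))"
  have sT: "s J \<in> T" if "J \<in> T" for J using swap_tidx[of J n k a] that assms(6) by (simp add: T_def s_def)
  have ss: "s (s J) = J" if "J \<in> T" for J using that assms(6) tidxD1[of J n k] by (simp add: T_def s_def)
  have h1: "S0 = (\<Sum>J\<in>T. scaleC (Aq q n k I J) (tp M k J L)) + scaleC c (\<Sum>J\<in>T. scaleC (Aq q n k I J) (tp M k J (s L)))"
    unfolding S0_def F_def by (simp add: scaleC_add_right sum.distrib scaleC_sum_right scaleC_scaleC mult.commute)
  have h2: "S0 = (\<Sum>J\<in>T. scaleC (Aq q n k I (s J)) (F (s J)))"
    unfolding S0_def
    by (rule sum.reindex_bij_witness[of _ s s]) (simp_all add: sT ss)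
  have h3: "Aq q n k I (s J) = - (q (J ! Suc a) (J ! a) * Aq q n k I J)" if J: "J \<in> T" for J
  proof -
    have lJ: "length J = k" using tidxD1[of J n k] J by (simp add: T_def)
    have "Aq q n k I (s (s J)) * q (s J ! a) (s J ! Suc a) = - Aq q n k I (s J)"
      unfolding s_def by (rule Aq_antisym[OF assms(4) _ assms(6) assms(1)]) (use sT[OF J] in \<open>simp add: T_def s_def\<close>)
    moreover have "s J ! a = J ! Suc a" "s J ! Suc a = J ! a" using lJ assms(6) by (simp_all add: s_def swap_nth_a swap_nth_Sa)
    ultimately show ?thesis using ss[OF J] by (simp add: mult.commute)
  qed
  have "S0 + S0 = (\<Sum>J\<in>T. scaleC (Aq q n k I J) (F J - scaleC (q (J ! Suc a) (J ! a)) (F (s J))))"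
  proof -
    have "S0 + S0 = (\<Sum>J\<in>T. scaleC (Aq q n k I J) (F J)) + (\<Sum>J\<in>T. scaleC (Aq q n k I (s J)) (F (s J)))"
      using h2 unfolding S0_def by simp
    also have "\<dots> = (\<Sum>J\<in>T. scaleC (Aq q n k I J) (F J) + scaleC (Aq q n k I (s J)) (F (s J)))"
      by (simp add: sum.distrib)
    also have "\<dots> = (\<Sum>J\<in>T. scaleC (Aq q n k I J) (F J - scaleC (q (J ! Suc a) (J ! a)) (F (s J))))"
    proof (rule sum.cong[OF refl])
      fix J assume J: "J \<in> T"
      show "scaleC (Aq q n k I J) (F J) + scaleC (Aq q n k I (s J)) (F (s J))
          = scaleC (Aq q n k I J) (F J - scaleC (q (J ! Suc a) (J ! a)) (F (s J)))"
        unfolding h3[OF J] by (simp add: scaleC_diff_right scaleC_scaleC scaleC_minus_left mult.commute)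
    qed
    finally show ?thesis .
  qed
  also have "\<dots> = 0"
  proof (rule sum.neutral, rule ballI)
    fix J assume J: "J \<in> T"
    have lJ: "length J = k" using tidxD1[of J n k] J by (simp add: T_def)
    have "F J - scaleC (q (J ! Suc a) (J ! a)) (F (s J)) = 0"
      unfolding F_def s_def c_def
      using G_zero[of J n k L m a q p M] J assms by (simp add: T_def)
    thus "scaleC (Aq q n k I J) (F J - scaleC (q (J ! Suc a) (J ! a)) (F (s J))) = 0" by simp
  qed
  finally have "S0 = 0" by (rule half_zero)
  hence "(\<Sum>J\<in>T. scaleC (Aq q n k I J) (tp M k J L)) + scaleC c (\<Sum>J\<in>T. scaleC (Aq q n k I J) (tp M k J (s L))) = 0"
    using h1 by simp
  thus ?thesis unfolding T_def s_def c_def by (simp add: eq_neg_iff_add_eq_0)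
qed



lemma X_word:
  assumes "is_parametric n q" "is_parametric m p" "manin q p n m M" "I \<in> tidx n k" "valid k w"
  defines "X \<equiv> \<lambda>L. (\<Sum>J\<in>tidx n k. scaleC (Aq q n k I J) (tp M k J L))"
  shows "L \<in> tidx m k \<Longrightarrow> (\<Sum>L'\<in>tidx m k. scaleC (Pword p m k w L' L) (X L')) = scaleC ((-1)^length w) (X L)"
  using assms(5)
proof (induction w arbitrary: L)
  case Nil
  have "(\<Sum>L'\<in>tidx m k. scaleC (Pword p m k [] L' L) (X L')) = (\<Sum>L'\<in>tidx m k. if L' = L then X L' else 0)"
    by (rule sum.cong[OF refl]) (simp add: Pword_Nil tid_def scaleC_one)
  also have "\<dots> = X L" using Nil.prems(1) by (simp add: sum.delta')
  finally show ?case by (simp add: scaleC_one)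
next
  case (Cons a w)
  have a: "Suc a < k" and vw: "valid k w" using Cons.prems(2) by (auto simp: valid_def)
  define T where "T = tidx m k"
  define s where "s = swap_idx a"
  have sT: "s J \<in> T" if "J \<in> T" for J using swap_tidx[of J m k a] that a by (simp add: T_def s_def)
  have ss: "s (s J) = J" if "J \<in> T" for J using that a tidxD1[of J m k] by (simp add: T_def s_def)
  have lenT: "length J = k" if "J \<in> T" for J using that tidxD1[of J m k] by (simp add: T_def)
  have "(\<Sum>L'\<in>T. scaleC (Pword p m k (a # w) L' L) (X L'))
      = (\<Sum>L'\<in>T. scaleC (p (L' ! Suc a) (L' ! a) * Pword p m k w (s L') L) (X L'))"
    by (rule sum.cong[OF refl]) (simp add: Pword_Cons tmul_Pswap[OF _ a] T_def s_def)
  also have "\<dots> = (\<Sum>L''\<in>T. scaleC (p (s L'' ! Suc a) (s L'' ! a) * Pword p m k w (s (s L'')) L) (X (s L'')))"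
    by (rule sum.reindex_bij_witness[of _ s s]) (simp_all add: sT ss)
  also have "\<dots> = (\<Sum>L''\<in>T. scaleC (Pword p m k w L'' L) (scaleC (p (L'' ! a) (L'' ! Suc a)) (X (s L''))))"
  proof (rule sum.cong[OF refl])
    fix L'' assume L'': "L'' \<in> T"
    have "s L'' ! Suc a = L'' ! a" "s L'' ! a = L'' ! Suc a"
      using lenT[OF L''] a by (simp_all add: s_def swap_nth_a swap_nth_Sa)
    thus "scaleC (p (s L'' ! Suc a) (s L'' ! a) * Pword p m k w (s (s L'')) L) (X (s L''))
        = scaleC (Pword p m k w L'' L) (scaleC (p (L'' ! a) (L'' ! Suc a)) (X (s L'')))"
      using ss[OF L''] by (simp add: scaleC_scaleC mult.commute)
  qed
  also have "\<dots> = (\<Sum>L''\<in>T. scaleC (Pword p m k w L'' L) (- X L''))"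
  proof (rule sum.cong[OF refl])
    fix L'' assume L'': "L'' \<in> T"
    have "X L'' = - scaleC (p (L'' ! a) (L'' ! Suc a)) (X (s L''))"
      unfolding X_def s_def using X_antisym[OF assms(1,2,3,4) _ a, of L''] L'' by (simp add: T_def)
    thus "scaleC (Pword p m k w L'' L) (scaleC (p (L'' ! a) (L'' ! Suc a)) (X (s L'')))
        = scaleC (Pword p m k w L'' L) (- X L'')" by simp
  qed
  also have "\<dots> = - (\<Sum>L''\<in>T. scaleC (Pword p m k w L'' L) (X L''))"
    by (simp add: scaleC_minus_right sum_negf)
  also have "\<dots> = - scaleC ((-1)^length w) (X L)"
    using Cons.IH[OF Cons.prems(1) vw] by (simp add: T_def)
  also have "\<dots> = scaleC ((-1)^length (a # w)) (X L)"
    by (simp add: scaleC_minus_left[symmetric])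
  finally show ?case by (simp add: T_def)
qed

lemma of_int_sign_sq: "(of_int (sign \<sigma>) :: complex) * of_int (sign \<sigma>) = 1"
proof -
  have "(of_int (sign \<sigma>) :: complex) * of_int (sign \<sigma>) = of_int (sign \<sigma> * sign \<sigma>)" by (simp only: of_int_mult)
  also have "\<dots> = 1" by (simp only: sign_idempotent of_int_1)
  finally show ?thesis .
qed

lemma X_A:
  assumes "is_parametric n q" "is_parametric m p" "manin q p n m M" "I \<in> tidx n k" "L \<in> tidx m k"
  defines "X \<equiv> \<lambda>L. (\<Sum>J\<in>tidx n k. scaleC (Aq q n k I J) (tp M k J L))"
  shows "(\<Sum>L'\<in>tidx m k. scaleC (Aq p m k L' L) (X L')) = X L"
proof -
  define S where "S = {\<sigma>. \<sigma> permutes {..<k}}"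
  define T where "T = tidx m k"
  have inner: "(\<Sum>L'\<in>T. scaleC (of_int (sign \<sigma>) * Pperm p m k \<sigma> L' L) (X L')) = X L" if s: "\<sigma> \<in> S" for \<sigma>
  proof -
    obtain w where w: "valid k w" "perm_of_word w = \<sigma>" "Pperm p m k \<sigma> = Pword p m k w"
      using Pperm_word[of \<sigma> k p m] s by (auto simp: S_def)
    have sg: "sign \<sigma> = (-1) ^ length w" using sign_perm_of_word[of w] w(2) by simp
    have "(\<Sum>L'\<in>T. scaleC (of_int (sign \<sigma>) * Pperm p m k \<sigma> L' L) (X L'))
        = scaleC (of_int (sign \<sigma>)) (\<Sum>L'\<in>T. scaleC (Pword p m k w L' L) (X L'))"
      by (simp add: scaleC_sum_right scaleC_scaleC w(3))
    also have "\<dots> = scaleC (of_int (sign \<sigma>)) (scaleC ((-1)^length w) (X L))"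
      using X_word[OF assms(1,2,3,4) w(1) assms(5)] by (simp add: T_def X_def)
    also have "\<dots> = scaleC (of_int (sign \<sigma>) * of_int (sign \<sigma>)) (X L)"
      by (simp add: scaleC_scaleC sg)
    also have "\<dots> = X L" by (simp only: of_int_sign_sq scaleC_one)
    finally show ?thesis .
  qed
  have "(\<Sum>L'\<in>T. scaleC (Aq p m k L' L) (X L'))
      = (\<Sum>L'\<in>T. scaleC (1 / fact k) (\<Sum>\<sigma>\<in>S. scaleC (of_int (sign \<sigma>) * Pperm p m k \<sigma> L' L) (X L')))"
  proof (rule sum.cong[OF refl])
    fix L' assume "L' \<in> T"
    have "scaleC (Aq p m k L' L) (X L') = scaleC (1 / fact k) (scaleC (\<Sum>\<sigma>\<in>S. of_int (sign \<sigma>) * Pperm p m k \<sigma> L' L) (X L'))"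
      by (simp add: Aq_def S_def scaleC_scaleC)
    also have "\<dots> = scaleC (1 / fact k) (\<Sum>\<sigma>\<in>S. scaleC (of_int (sign \<sigma>) * Pperm p m k \<sigma> L' L) (X L'))"
      by (simp only: scaleC_sum_left)
    finally show "scaleC (Aq p m k L' L) (X L') = scaleC (1 / fact k) (\<Sum>\<sigma>\<in>S. scaleC (of_int (sign \<sigma>) * Pperm p m k \<sigma> L' L) (X L'))" .
  qed
  also have "\<dots> = scaleC (1 / fact k) (\<Sum>\<sigma>\<in>S. \<Sum>L'\<in>T. scaleC (of_int (sign \<sigma>) * Pperm p m k \<sigma> L' L) (X L'))"
    by (simp add: scaleC_sum_right[symmetric] sum.swap[of _ T])
  also have "\<dots> = scaleC (1 / fact k) (\<Sum>\<sigma>\<in>S. scaleC 1 (X L))"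
    using inner by (simp add: scaleC_one)
  also have "\<dots> = scaleC (1 / fact k) (scaleC (of_nat (card S)) (X L))"
  proof -
    have "(\<Sum>\<sigma>\<in>S. scaleC (1::complex) (X L)) = scaleC (\<Sum>\<sigma>\<in>S. 1) (X L)" by (simp only: scaleC_sum_left)
    moreover have "(\<Sum>\<sigma>\<in>S. (1::complex)) = of_nat (card S)" by simp
    ultimately show ?thesis by simp
  qed
  also have "card S = fact k" unfolding S_def by (rule card_permutations) simp_all
  also have "scaleC (1 / fact k) (scaleC (of_nat (fact k)) (X L)) = X L"
    by (simp add: scaleC_scaleC scaleC_one)
  finally show ?thesis by (simp add: T_def)
qed



lemma comm_prod_list:
  "(\<forall>x\<in>set xs. x * y = y * x) \<Longrightarrow> prod_list xs * (y::'a::monoid_mult) = y * prod_list xs"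
proof (induction xs)
  case (Cons x xs)
  have "prod_list (x # xs) * y = x * (prod_list xs * y)" by (simp add: mult.assoc)
  also have "\<dots> = x * (y * prod_list xs)" using Cons by simp
  also have "\<dots> = (x * y) * prod_list xs" by (simp add: mult.assoc)
  also have "\<dots> = (y * x) * prod_list xs" using Cons.prems by simp
  finally show ?case by (simp add: mult.assoc)
qed simp

lemma comm_prod_list2:
  "(\<forall>x\<in>set xs. \<forall>y\<in>set ys. x * y = y * x) \<Longrightarrow> prod_list xs * prod_list (ys::'a::monoid_mult list) = prod_list ys * prod_list xs"
proof (induction ys)
  case (Cons y ys)
  have c: "prod_list xs * y = y * prod_list xs" using Cons.prems by (intro comm_prod_list) simp
  have "prod_list xs * prod_list (y # ys) = (prod_list xs * y) * prod_list ys" by (simp add: mult.assoc)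
  also have "\<dots> = y * (prod_list xs * prod_list ys)" unfolding c by (simp add: mult.assoc)
  also have "\<dots> = y * (prod_list ys * prod_list xs)"
  proof -
    have "prod_list xs * prod_list ys = prod_list ys * prod_list xs" using Cons.prems by (intro Cons.IH) auto
    thus ?thesis by simp
  qed
  finally show ?case by (simp add: mult.assoc)
qed simp

lemma tp_Suc: "tp X (Suc k) J I = tp X k J I * X (J ! k) (I ! k)"
  by (simp add: tp_def)

lemma tp_app_right: "length L = k \<Longrightarrow> tp X k J (L @ [l]) = tp X k J L"
  unfolding tp_def by (rule arg_cong[where f = prod_list], rule map_cong) (simp_all add: nth_append)

lemma tp_app_left: "length L = k \<Longrightarrow> tp X k (L @ [l]) I = tp X k L I"
  unfolding tp_def by (rule arg_cong[where f = prod_list], rule map_cong) (simp_all add: nth_append)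

lemma sum_tidx_Suc:
  "(\<Sum>L'\<in>tidx m (Suc k). g L') = (\<Sum>L\<in>tidx m k. \<Sum>l<m. g (L @ [l]))"
proof -
  have "(\<Sum>L'\<in>tidx m (Suc k). g L') = (\<Sum>pr\<in>tidx m k \<times> {..<m}. g (fst pr @ [snd pr]))"
  proof (rule sum.reindex_bij_witness[of _ "\<lambda>pr. fst pr @ [snd pr]" "\<lambda>L'. (butlast L', last L')"])
    fix L' assume L': "L' \<in> tidx m (Suc k)"
    hence ne: "L' \<noteq> []" and len: "length L' = Suc k" and sub: "set L' \<subseteq> {..<m}" by (auto simp: tidx_def)
    show "fst (butlast L', last L') @ [snd (butlast L', last L')] = L'" using ne by simp
    have "set (butlast L') \<subseteq> {..<m}" using sub in_set_butlastD by fastforce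
    moreover have "last L' < m" using sub last_in_set[OF ne] by auto
    ultimately show "(butlast L', last L') \<in> tidx m k \<times> {..<m}" using len by (simp add: tidx_def)
    show "g (fst (butlast L', last L') @ [snd (butlast L', last L')]) = g L'" using ne by simp
  next
    fix pr assume pr: "pr \<in> tidx m k \<times> {..<m}"
    show "(butlast (fst pr @ [snd pr]), last (fst pr @ [snd pr])) = pr" by simp
    show "fst pr @ [snd pr] \<in> tidx m (Suc k)" using pr by (auto simp: tidx_def)
  qed
  also have "\<dots> = (\<Sum>L\<in>tidx m k. \<Sum>l<m. g (L @ [l]))"
    by (simp add: sum.cartesian_product split_beta)
  finally show ?thesis .
qed

lemma tp_matmul:
  assumes H: "\<forall>i<m. \<forall>j<n. \<forall>k<n. \<forall>l<m. N i j * M k l = M k l * N i j"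
  shows "(\<forall>x<k. J ! x < n \<and> I ! x < n) \<Longrightarrow>
    tp (matmul m M N) k J I = (\<Sum>L\<in>tidx m k. tp M k J L * tp N k L I)"
proof (induction k)
  case 0
  have "tidx m 0 = {[]}" by (auto simp: tidx_def)
  thus ?case by (simp add: tp_def)
next
  case (Suc k)
  have IH: "tp (matmul m M N) k J I = (\<Sum>L\<in>tidx m k. tp M k J L * tp N k L I)"
    using Suc.IH Suc.prems by simp
  have Jk: "J ! k < n" and Ik: "I ! k < n" using Suc.prems by auto
  have "tp (matmul m M N) (Suc k) J I
      = (\<Sum>L\<in>tidx m k. tp M k J L * tp N k L I) * (\<Sum>l<m. M (J ! k) l * N l (I ! k))"
    by (simp add: tp_Suc IH matmul_def)
  also have "\<dots> = (\<Sum>l<m. \<Sum>L\<in>tidx m k. tp M k J L * tp N k L I * (M (J ! k) l * N l (I ! k)))"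
    by (simp add: sum_distrib_left sum_distrib_right)
  also have "\<dots> = (\<Sum>L\<in>tidx m k. \<Sum>l<m. tp M k J L * tp N k L I * (M (J ! k) l * N l (I ! k)))"
    by (rule sum.swap)
  also have "\<dots> = (\<Sum>L\<in>tidx m k. \<Sum>l<m. tp M (Suc k) J (L @ [l]) * tp N (Suc k) (L @ [l]) I)"
  proof (intro sum.cong refl)
    fix L l assume L: "L \<in> tidx m k" and l: "l \<in> {..<m}"
    have len: "length L = k" using tidxD1[OF L] .
    have c: "tp N k L I * M (J ! k) l = M (J ! k) l * tp N k L I"
      unfolding tp_def
    proof (rule comm_prod_list, rule ballI)
      fix x assume "x \<in> set (map (\<lambda>a. N (L ! a) (I ! a)) [0..<k])"
      then obtain y where y: "y < k" "x = N (L ! y) (I ! y)" by auto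
      have "L ! y < m" using tidxD2[OF L y(1)] .
      moreover have "I ! y < n" using Suc.prems y(1) by simp
      ultimately show "x * M (J ! k) l = M (J ! k) l * x" using H Jk l y(2) by simp
    qed
    have "tp M (Suc k) J (L @ [l]) * tp N (Suc k) (L @ [l]) I
        = (tp M k J L * M (J ! k) l) * (tp N k L I * N l (I ! k))"
      using len by (simp add: tp_Suc tp_app_right tp_app_left nth_append)
    also have "\<dots> = tp M k J L * (M (J ! k) l * tp N k L I) * N l (I ! k)" by (simp add: mult.assoc)
    also have "\<dots> = tp M k J L * tp N k L I * (M (J ! k) l * N l (I ! k))" unfolding c[symmetric] by (simp add: mult.assoc)
    finally show "tp M k J L * tp N k L I * (M (J ! k) l * N l (I ! k)) = tp M (Suc k) J (L @ [l]) * tp N (Suc k) (L @ [l]) I" by simp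
  qed
  also have "\<dots> = (\<Sum>L\<in>tidx m (Suc k). tp M (Suc k) J L * tp N (Suc k) L I)"
    by (rule sum_tidx_Suc[symmetric])
  finally show ?case .
qed



lemma sum_scaleC_mult:
  "(\<Sum>J\<in>A. scaleC (c J) (\<Sum>L\<in>B. f J L * g L)) = (\<Sum>L\<in>B. (\<Sum>J\<in>A. scaleC (c J) (f J L)) * (g L::'a::cplx_algebra_1))"
proof -
  have "(\<Sum>J\<in>A. scaleC (c J) (\<Sum>L\<in>B. f J L * g L)) = (\<Sum>J\<in>A. \<Sum>L\<in>B. scaleC (c J) (f J L) * g L)"
    by (simp add: scaleC_sum_right mult_scaleC_left)
  also have "\<dots> = (\<Sum>L\<in>B. \<Sum>J\<in>A. scaleC (c J) (f J L) * g L)" by (rule sum.swap)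
  also have "\<dots> = (\<Sum>L\<in>B. (\<Sum>J\<in>A. scaleC (c J) (f J L)) * g L)" by (simp add: sum_distrib_right)
  finally show ?thesis .
qed

lemma ek_eq:
  assumes pq: "is_parametric n q" and pp: "is_parametric m p"
    and mM: "manin q p n m M" and mN: "manin p q m n N"
    and H: "\<forall>i<m. \<forall>j<n. \<forall>k<n. \<forall>l<m. N i j * M k l = M k l * N i j"
    and k0: "k \<noteq> 0"
  shows "ek q n k (matmul m M N) = ek p m k (matmul n N M)"
proof -
  define Tn where "Tn = tidx n k"
  define Tm where "Tm = tidx m k"
  define t where "t I J L L' = scaleC (Aq q n k I J * Aq p m k L' L) (tp N k L I * tp M k J L')" for I J L L'
  have H': "\<forall>i<n. \<forall>j<m. \<forall>k<m. \<forall>l<n. M i j * N k l = N k l * M i j" using H by simp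
  have tcomm: "tp M k J L' * tp N k L I = tp N k L I * tp M k J L'"
    if "I \<in> Tn" "J \<in> Tn" "L \<in> Tm" "L' \<in> Tm" for I J L L'
    unfolding tp_def
  proof (rule comm_prod_list2, intro ballI)
    fix x y assume x: "x \<in> set (map (\<lambda>a. M (J ! a) (L' ! a)) [0..<k])" and y: "y \<in> set (map (\<lambda>a. N (L ! a) (I ! a)) [0..<k])"
    from x obtain a where a: "a < k" "x = M (J ! a) (L' ! a)" by auto
    from y obtain b where b: "b < k" "y = N (L ! b) (I ! b)" by auto
    have "J ! a < n" "L' ! a < m" "L ! b < m" "I ! b < n"
      using that a(1) b(1) by (simp_all add: Tn_def Tm_def tidxD2)
    thus "x * y = y * x" using H a(2) b(2) by simp
  qed
  have inTn: "\<forall>x<k. J ! x < n \<and> I ! x < n" if "I \<in> Tn" "J \<in> Tn" for I J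
    using that by (simp add: Tn_def tidxD2)
  have inTm: "\<forall>x<k. J ! x < m \<and> I ! x < m" if "I \<in> Tm" "J \<in> Tm" for I J
    using that by (simp add: Tm_def tidxD2)
  have A: "ek q n k (matmul m M N) = (\<Sum>I\<in>Tn. \<Sum>J\<in>Tn. \<Sum>L\<in>Tm. \<Sum>L'\<in>Tm. t I J L L')"
  proof -
    have "ek q n k (matmul m M N) = (\<Sum>I\<in>Tn. \<Sum>J\<in>Tn. scaleC (Aq q n k I J) (\<Sum>L\<in>Tm. tp M k J L * tp N k L I))"
      unfolding ek_tp[OF k0] Tn_def Tm_def
      by (intro sum.cong refl arg_cong[where f = "scaleC _"] tp_matmul[OF H] inTn[unfolded Tn_def])
    also have "\<dots> = (\<Sum>I\<in>Tn. \<Sum>L\<in>Tm. (\<Sum>J\<in>Tn. scaleC (Aq q n k I J) (tp M k J L)) * tp N k L I)"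
      by (simp only: sum_scaleC_mult)
    also have "\<dots> = (\<Sum>I\<in>Tn. \<Sum>L\<in>Tm. (\<Sum>L'\<in>Tm. scaleC (Aq p m k L' L) (\<Sum>J\<in>Tn. scaleC (Aq q n k I J) (tp M k J L'))) * tp N k L I)"
    proof (rule sum.cong[OF refl], rule sum.cong[OF refl])
      fix I L assume "I \<in> Tn" "L \<in> Tm"
      thus "(\<Sum>J\<in>Tn. scaleC (Aq q n k I J) (tp M k J L)) * tp N k L I = (\<Sum>L'\<in>Tm. scaleC (Aq p m k L' L) (\<Sum>J\<in>Tn. scaleC (Aq q n k I J) (tp M k J L'))) * tp N k L I"
        using X_A[OF pq pp mM, of I k L] by (simp add: Tn_def Tm_def)
    qed
    also have "\<dots> = (\<Sum>I\<in>Tn. \<Sum>L\<in>Tm. \<Sum>L'\<in>Tm. \<Sum>J\<in>Tn. t I J L L')"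
    proof (rule sum.cong[OF refl], rule sum.cong[OF refl])
      fix I L assume I: "I \<in> Tn" and L: "L \<in> Tm"
      show "(\<Sum>L'\<in>Tm. scaleC (Aq p m k L' L) (\<Sum>J\<in>Tn. scaleC (Aq q n k I J) (tp M k J L'))) * tp N k L I = (\<Sum>L'\<in>Tm. \<Sum>J\<in>Tn. t I J L L')"
        unfolding sum_distrib_right scaleC_sum_right
      proof (rule sum.cong[OF refl], rule sum.cong[OF refl])
        fix L' J assume L': "L' \<in> Tm" and J: "J \<in> Tn"
        show "scaleC (Aq p m k L' L) (scaleC (Aq q n k I J) (tp M k J L')) * tp N k L I = t I J L L'"
          unfolding t_def using tcomm[OF I J L L'] by (simp add: scaleC_scaleC mult_scaleC_left mult.commute)
      qed
    qed
    also have "\<dots> = (\<Sum>I\<in>Tn. \<Sum>L\<in>Tm. \<Sum>J\<in>Tn. \<Sum>L'\<in>Tm. t I J L L')"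
      by (rule sum.cong[OF refl], rule sum.cong[OF refl], rule sum.swap)
    also have "\<dots> = (\<Sum>I\<in>Tn. \<Sum>J\<in>Tn. \<Sum>L\<in>Tm. \<Sum>L'\<in>Tm. t I J L L')"
      by (rule sum.cong[OF refl], rule sum.swap)
    finally show ?thesis .
  qed
  have B: "ek p m k (matmul n N M) = (\<Sum>I\<in>Tn. \<Sum>J\<in>Tn. \<Sum>L\<in>Tm. \<Sum>L'\<in>Tm. t I J L L')"
  proof -
    have "ek p m k (matmul n N M) = (\<Sum>L'\<in>Tm. \<Sum>L\<in>Tm. scaleC (Aq p m k L' L) (\<Sum>I\<in>Tn. tp N k L I * tp M k I L'))"
      unfolding ek_tp[OF k0] Tn_def Tm_def
      by (intro sum.cong refl arg_cong[where f = "scaleC _"] tp_matmul[OF H'] inTm[unfolded Tm_def])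
    also have "\<dots> = (\<Sum>L'\<in>Tm. \<Sum>I\<in>Tn. (\<Sum>L\<in>Tm. scaleC (Aq p m k L' L) (tp N k L I)) * tp M k I L')"
      by (simp only: sum_scaleC_mult)
    also have "\<dots> = (\<Sum>L'\<in>Tm. \<Sum>I\<in>Tn. (\<Sum>J\<in>Tn. scaleC (Aq q n k J I) (\<Sum>L\<in>Tm. scaleC (Aq p m k L' L) (tp N k L J))) * tp M k I L')"
    proof (rule sum.cong[OF refl], rule sum.cong[OF refl])
      fix L' I assume "L' \<in> Tm" "I \<in> Tn"
      thus "(\<Sum>L\<in>Tm. scaleC (Aq p m k L' L) (tp N k L I)) * tp M k I L' = (\<Sum>J\<in>Tn. scaleC (Aq q n k J I) (\<Sum>L\<in>Tm. scaleC (Aq p m k L' L) (tp N k L J))) * tp M k I L'"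
        using X_A[OF pp pq mN, of L' k I] by (simp add: Tn_def Tm_def)
    qed
    also have "\<dots> = (\<Sum>L'\<in>Tm. \<Sum>I\<in>Tn. \<Sum>J\<in>Tn. \<Sum>L\<in>Tm. t J I L L')"
    proof (rule sum.cong[OF refl], rule sum.cong[OF refl])
      fix L' I assume L': "L' \<in> Tm" and I: "I \<in> Tn"
      show "(\<Sum>J\<in>Tn. scaleC (Aq q n k J I) (\<Sum>L\<in>Tm. scaleC (Aq p m k L' L) (tp N k L J))) * tp M k I L' = (\<Sum>J\<in>Tn. \<Sum>L\<in>Tm. t J I L L')"
        unfolding sum_distrib_right scaleC_sum_right
      proof (rule sum.cong[OF refl], rule sum.cong[OF refl])
        fix J L assume J: "J \<in> Tn" and L: "L \<in> Tm"
        show "scaleC (Aq q n k J I) (scaleC (Aq p m k L' L) (tp N k L J)) * tp M k I L' = t J I L L'"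
          unfolding t_def by (simp add: scaleC_scaleC mult_scaleC_left)
      qed
    qed
    also have "\<dots> = (\<Sum>I\<in>Tn. \<Sum>L'\<in>Tm. \<Sum>J\<in>Tn. \<Sum>L\<in>Tm. t J I L L')"
      by (rule sum.swap)
    also have "\<dots> = (\<Sum>I\<in>Tn. \<Sum>J\<in>Tn. \<Sum>L'\<in>Tm. \<Sum>L\<in>Tm. t J I L L')"
      by (rule sum.cong[OF refl], rule sum.swap)
    also have "\<dots> = (\<Sum>I\<in>Tn. \<Sum>J\<in>Tn. \<Sum>L\<in>Tm. \<Sum>L'\<in>Tm. t J I L L')"
      by (rule sum.cong[OF refl], rule sum.cong[OF refl], rule sum.swap)
    also have "\<dots> = (\<Sum>J\<in>Tn. \<Sum>I\<in>Tn. \<Sum>L\<in>Tm. \<Sum>L'\<in>Tm. t J I L L')"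
      by (rule sum.swap)
    finally show ?thesis .
  qed
  show ?thesis using A B by simp
qed

lemma ek_eq_all:
  assumes "is_parametric n q" "is_parametric m p" "manin q p n m M" "manin p q m n N"
    "\<forall>i<m. \<forall>j<n. \<forall>k<n. \<forall>l<m. N i j * M k l = M k l * N i j"
  shows "ek q n k (matmul m M N) = ek p m k (matmul n N M)"
proof (cases "k = 0")
  case True thus ?thesis by (simp add: ek_def)
next
  case False thus ?thesis using ek_eq[OF assms] by simp
qed

theorem mainTheorem18:
  fixes q p :: "nat \<Rightarrow> nat \<Rightarrow> complex"
    and M N :: "nat \<Rightarrow> nat \<Rightarrow> 'a::cplx_algebra_1"
    and n m :: nat
  assumes "is_parametric n q" and "is_parametric m p"
    and "manin q p n m M" and "manin p q m n N"
    and "\<forall>i<m. \<forall>j<n. \<forall>k<n. \<forall>l<m. N i j * M k l = M k l * N i j"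
  shows "\<forall>j::int. char_coeff q n (matmul m M N) j
                   = char_coeff p m (matmul n N M) (j - (int n - int m))"
proof
  fix j :: int
  define d where "d = int n - j"
  define k where "k = nat d"
  have E: "ek q n k (matmul m M N) = ek p m k (matmul n N M)" by (rule ek_eq_all[OF assms])
  have L: "char_coeff q n (matmul m M N) j = (if 0 \<le> d \<and> d \<le> int n then (-1)^k * ek q n k (matmul m M N) else 0)"
  proof (cases "0 \<le> j \<and> j \<le> int n")
    case True
    hence "n - nat j = k" unfolding k_def d_def by linarith
    thus ?thesis using True unfolding char_coeff_def d_def by simp
  next
    case False thus ?thesis unfolding char_coeff_def d_def by auto
  qed
  have R: "char_coeff p m (matmul n N M) (j - (int n - int m)) = (if 0 \<le> d \<and> d \<le> int m then (-1)^k * ek p m k (matmul n N M) else 0)"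
  proof (cases "0 \<le> j - (int n - int m) \<and> j - (int n - int m) \<le> int m")
    case True
    hence "m - nat (j - (int n - int m)) = k" unfolding k_def d_def by linarith
    thus ?thesis using True unfolding char_coeff_def d_def by simp
  next
    case False thus ?thesis unfolding char_coeff_def d_def by auto
  qed
  have V1: "n < k \<Longrightarrow> ek q n k (matmul m M N) = 0" using ek_vanish[OF _ assms(1)] by blast
  have V2: "m < k \<Longrightarrow> ek p m k (matmul n N M) = 0" using ek_vanish[OF _ assms(2)] by blast
  show "char_coeff q n (matmul m M N) j = char_coeff p m (matmul n N M) (j - (int n - int m))"
    unfolding L R
  proof (cases "0 \<le> d")
    case True
    hence kd: "int k = d" unfolding k_def by simp
    show "(if 0 \<le> d \<and> d \<le> int n then (-1)^k * ek q n k (matmul m M N) else 0)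
        = (if 0 \<le> d \<and> d \<le> int m then (-1)^k * ek p m k (matmul n N M) else 0)"
      using E V1 V2 kd True by auto
  next
    case False thus "(if 0 \<le> d \<and> d \<le> int n then (-1)^k * ek q n k (matmul m M N) else 0)
        = (if 0 \<le> d \<and> d \<le> int m then (-1)^k * ek p m k (matmul n N M) else 0)" by simp
  qed
qed

end
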